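(* Let $u:[0,b)\to(0,\infty)$ be a solution of $\frac{u''}{1+(u')^2}=\frac{xu'}{2}-\frac u2+\frac{n-1}{u}$ with $u(0)<\sqrt{2(n-1)}$ and $u'(0)<0$. Then $u$ is strictly convex on $[0,b)$.
   Context: $n\ge2$ is a fixed integer. *)

theory Defs
  imports "HOL-Analysis.Analysis" "HOL-Library.Extended_Real"
begin

definition strictly_convex_on :: "real set \<Rightarrow> (real \<Rightarrow> real) \<Rightarrow> bool" where
  "strictly_convex_on S f \<longleftrightarrow> convex S \<and>
    (\<forall>x\<in>S. \<forall>y\<in>S. \<forall>t. x \<noteq> y \<longrightarrow> 0 < t \<longrightarrow> t < 1 \<longrightarrow>
       f ((1 - t) * x + t * y) < (1 - t) * f x + t * f y)"

end

theory Submission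
  imports Defs
begin

lemma open_ereal_less: "open {x::real. ereal x < b}"
proof (cases b)
  case (real r)
  then have "{x::real. ereal x < b} = {..<r}" by auto
  then show ?thesis by simp
next
  case PInf
  then show ?thesis by simp
next
  case MInf
  then show ?thesis by simp
qed

theorem lemma2p11:
  fixes n :: nat and b :: ereal and u u' u'' :: "real \<Rightarrow> real"
  assumes n: "n \<ge> 2"
    and b: "b > 0"
    and pos: "\<And>x. 0 \<le> x \<Longrightarrow> ereal x < b \<Longrightarrow> u x > 0"
    and d1: "\<And>x. 0 \<le> x \<Longrightarrow> ereal x < b \<Longrightarrow>
               (u has_real_derivative u' x) (at x within {y. 0 \<le> y \<and> ereal y < b})"
    and d2: "\<And>x. 0 \<le> x \<Longrightarrow> ereal x < b \<Longrightarrow>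
               (u' has_real_derivative u'' x) (at x within {y. 0 \<le> y \<and> ereal y < b})"
    and ode: "\<And>x. 0 \<le> x \<Longrightarrow> ereal x < b \<Longrightarrow>
               u'' x / (1 + (u' x)\<^sup>2) = x * u' x / 2 - u x / 2 + (real n - 1) / u x"
    and init1: "u 0 < sqrt (2 * (real n - 1))"
    and init2: "u' 0 < 0"
  shows "strictly_convex_on {x. 0 \<le> x \<and> ereal x < b} u"
proof -
  define S where "S = {y. 0 \<le> y \<and> ereal y < b}"
  define Op where "Op = {y. 0 < y \<and> ereal y < b}"
  define k where "k = real n - 1"
  have k: "k \<ge> 1" using n unfolding k_def by simp
  define psi where "psi x = (x * u x * u' x - (u x)\<^sup>2)/2 + k" for x
  define Y where "Y x = u' x * (x * u' x - u x)/2 + x * (1 + (u' x)\<^sup>2) * psi x / 2" for x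
  have S0: "0 \<in> S" using b by (simp add: S_def zero_ereal_def)
  have OpS: "Op \<subseteq> S" unfolding Op_def S_def by auto
  have openOp: "open Op"
  proof -
    have "Op = {y. 0 < y} \<inter> {y. ereal y < b}" unfolding Op_def by auto
    then show ?thesis using open_ereal_less[of b] by (simp add: open_Int open_Collect_less)
  qed
  have Sd1: "\<And>x. x \<in> S \<Longrightarrow> (u has_real_derivative u' x) (at x within S)"
    using d1 unfolding S_def by auto
  have Sd2: "\<And>x. x \<in> S \<Longrightarrow> (u' has_real_derivative u'' x) (at x within S)"
    using d2 unfolding S_def by auto
  have Spos: "\<And>x. x \<in> S \<Longrightarrow> u x > 0" using pos unfolding S_def by auto
  have upp: "u'' x = (1 + (u' x)\<^sup>2) * psi x / u x" if x: "x \<in> S" for x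
  proof -
    have up: "u x > 0" using Spos x by auto
    have h1: "1 + (u' x)\<^sup>2 > 0" by (simp add: add_pos_nonneg)
    have "u'' x = (1 + (u' x)\<^sup>2) * (x * u' x / 2 - u x / 2 + (real n - 1) / u x)"
      using ode[of x] x h1 unfolding S_def by (simp add: field_simps)
    also have "\<dots> = (1 + (u' x)\<^sup>2) * psi x / u x"
      using up unfolding psi_def k_def by (simp add: field_simps power2_eq_square)
    finally show ?thesis .
  qed
  have dpsi: "(psi has_real_derivative Y x) (at x within S)" if x: "x \<in> S" for x
  proof -
    have "((\<lambda>x. (x * u x * u' x - (u x)\<^sup>2)/2 + k) has_real_derivative
       ((u x + x * u' x) * u' x + x * u x * u'' x - 2 * u x * u' x) / 2) (at x within S)"
      by (auto intro!: derivative_eq_intros Sd1[OF x] Sd2[OF x] simp: field_simps power2_eq_square)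
    moreover have "((u x + x * u' x) * u' x + x * u x * u'' x - 2 * u x * u' x) / 2 = Y x"
      using upp[OF x] Spos[OF x] unfolding Y_def by (simp add: field_simps)
    ultimately show ?thesis unfolding psi_def[abs_def] by simp
  qed

  have dY: "(Y has_real_derivative
      (x * (1 + (u' x)\<^sup>2) / 2 * Y x + (1 + (u' x)\<^sup>2) * x * u' x * psi x * (1 + psi x) / u x))
      (at x within S)" if x: "x \<in> S" for x
  proof -
    have up: "u x > 0" using Spos x by auto
    have un: "u x \<noteq> 0" using up by simp
    show ?thesis unfolding Y_def[abs_def] using un
      by (auto intro!: derivative_eq_intros Sd1[OF x] Sd2[OF x] dpsi[OF x]
          simp: upp[OF x] Y_def field_simps power2_eq_square)
  qed
  have contY: "continuous_on S Y" by (rule DERIV_continuous_on[OF dY])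
  have contpsi: "continuous_on S psi" by (rule DERIV_continuous_on[OF dpsi])
  have contu: "continuous_on S u" by (rule DERIV_continuous_on[OF Sd1])
  have contu': "continuous_on S u'" by (rule DERIV_continuous_on[OF Sd2])
  have toat: "(f has_real_derivative D) (at x)"
    if "x \<in> Op" "(f has_real_derivative D) (at x within S)" for f D x
    using DERIV_subset[OF that(2) OpS] at_within_open[OF that(1) openOp] by simp
  have seg: "{x..y} \<subseteq> S" if "x \<in> S" "y \<in> S" for x y
  proof
    fix t assume t: "t \<in> {x..y}"
    have "ereal t \<le> ereal y" using t by simp
    moreover have "ereal y < b" using that(2) unfolding S_def by simp
    ultimately have "ereal t < b" by (rule le_less_trans)
    then show "t \<in> S" using that t unfolding S_def by auto
  qed
  have inOp: "t \<in> Op" if "x \<in> S" "y \<in> S" "x < t" "t < y" for x y t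
  proof -
    have "ereal t < ereal y" using that by simp
    moreover have "ereal y < b" using that(2) unfolding S_def by simp
    ultimately have "ereal t < b" by (rule less_trans)
    then show ?thesis using that unfolding S_def Op_def by auto
  qed
  have Y0: "Y 0 > 0"
  proof -
    have "u 0 > 0" using Spos S0 by auto
    then have "0 < u' 0 * (0 * u' 0 - u 0)" using init2 by (simp add: mult_neg_pos)
    then show ?thesis unfolding Y_def by simp
  qed
  have psi0: "psi 0 > 0"
  proof -
    have u0: "u 0 > 0" using Spos S0 by auto
    have "(u 0)^2 < (sqrt (2*k))^2"
      by (rule power_strict_mono) (use init1 u0 in \<open>auto simp: k_def\<close>)
    then have "(u 0)^2 < 2*k" using k by simp
    then show ?thesis unfolding psi_def by simp
  qed
  have psi_mono: "psi x < psi y"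
    if xy: "x \<in> S" "y \<in> S" "x < y" and Yp: "\<And>t. x < t \<Longrightarrow> t < y \<Longrightarrow> Y t > 0" for x y
  proof (rule DERIV_pos_imp_increasing_open[OF xy(3)])
    fix t assume t: "x < t" "t < y"
    have "t \<in> Op" using inOp[OF xy(1,2) t] .
    moreover have "t \<in> S" using \<open>t \<in> Op\<close> OpS by auto
    ultimately show "\<exists>d. (psi has_real_derivative d) (at t) \<and> 0 < d"
      using toat dpsi Yp[OF t] by blast
  next
    show "continuous_on {x..y} psi" using continuous_on_subset[OF contpsi seg[OF xy(1,2)]] .
  qed
  have Ypos: "\<forall>x\<in>S. Y x > 0"
  proof (rule ccontr)
    assume "\<not> (\<forall>x\<in>S. Y x > 0)"
    then obtain x3 where x3: "x3 \<in> S" "Y x3 \<le> 0" by force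
    have x3ge: "0 \<le> x3" using x3 unfolding S_def by auto
    define T where "T = {0..x3} \<inter> Y -` {..0}"
    have segS: "{0..x3} \<subseteq> S" using seg[OF S0 x3(1)] .
    have cT: "closed T" unfolding T_def
      by (rule continuous_closed_preimage) (use continuous_on_subset[OF contY segS] in auto)
    have nT: "x3 \<in> T" using x3 x3ge unfolding T_def by auto
    have bT: "bdd_below T" unfolding T_def by (rule bdd_belowI[of _ 0]) auto
    define t0 where "t0 = Inf T"
    have t0T: "t0 \<in> T" unfolding t0_def using closed_contains_Inf[OF _ bT cT] nT by auto
    have low: "t0 \<le> t" if "t \<in> T" for t unfolding t0_def using cInf_lower[OF that bT] .
    have t0r: "0 \<le> t0" "t0 \<le> x3" "Y t0 \<le> 0" using t0T unfolding T_def by auto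
    have t0S: "t0 \<in> S" using segS t0r by auto
    have before: "Y t > 0" if "0 \<le> t" "t < t0" for t
    proof (rule ccontr)
      assume "\<not> Y t > 0"
      then have "t \<in> T" using that t0r unfolding T_def by auto
      then show False using low that by force
    qed
    have t0pos: "0 < t0"
    proof (rule ccontr)
      assume "\<not> 0 < t0"
      then have "t0 = 0" using t0r by auto
      then show False using Y0 t0r by auto
    qed
    have Yeq: "Y t0 = 0"
    proof (rule ccontr)
      assume "Y t0 \<noteq> 0"
      then have neg: "Y t0 < 0" using t0r by auto
      obtain t where t: "0 \<le> t" "t \<le> t0" "Y t = 0"
        using IVT2'[of Y t0 0 0] neg Y0 t0r continuous_on_subset[OF contY seg[OF S0 t0S]] by auto
      then have "t < t0" using neg by (cases "t = t0") auto
      then show False using before t by force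
    qed
    have psit0: "psi t0 > 0"
      using psi_mono[OF S0 t0S t0pos] before psi0 by force
    have ut0: "u t0 > 0" using Spos t0S by auto
    show False
    proof (cases "u' t0 \<le> 0")
      case True
      have "t0 * u' t0 - u t0 < 0" using True t0pos ut0
        by (smt (verit) mult_nonneg_nonpos)
      then have a: "0 \<le> u' t0 * (t0 * u' t0 - u t0)" using True by (simp add: mult_nonpos_nonpos)
      have "0 < t0 * (1 + (u' t0)\<^sup>2) * psi t0"
        using t0pos psit0 by (simp add: add_pos_nonneg)
      then have "Y t0 > 0" unfolding Y_def using a by simp
      then show False using Yeq by simp
    next
      case False
      then have w: "u' t0 > 0" by simp
      define D where "D = t0 * (1 + (u' t0)\<^sup>2) / 2 * Y t0 + (1 + (u' t0)\<^sup>2) * t0 * u' t0 * psi t0 * (1 + psi t0) / u t0"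
      have Dpos: "D > 0" unfolding D_def using Yeq t0pos w psit0 ut0
        by (simp add: add_pos_nonneg)
      have t0Op: "t0 \<in> Op" using t0S t0pos unfolding S_def Op_def by auto
      have "DERIV Y t0 :> D" unfolding D_def using toat[OF t0Op dY[OF t0S]] .
      from DERIV_pos_inc_left[OF this Dpos] obtain d where d: "d > 0"
        "\<And>h. h > 0 \<Longrightarrow> h < d \<Longrightarrow> Y (t0 - h) < Y t0" by blast
      define h where "h = min (d/2) (t0/2)"
      have h: "h > 0" "h < d" "h < t0" unfolding h_def using d t0pos by auto
      have "Y (t0 - h) < 0" using d(2)[OF h(1,2)] Yeq by simp
      moreover have "Y (t0 - h) > 0" using before h by simp
      ultimately show False by simp
    qed
  qed
  have psipos: "psi x > 0" if x: "x \<in> S" for x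
  proof (cases "x = 0")
    case True then show ?thesis using psi0 by simp
  next
    case False
    then have "0 < x" using x unfolding S_def by auto
    then show ?thesis using psi_mono[OF S0 x] Ypos psi0 by (smt (verit) inOp S0 x OpS subsetD)
  qed
  have upppos: "u'' x > 0" if x: "x \<in> S" for x
    using upp[OF x] psipos[OF x] Spos[OF x] by (simp add: add_pos_nonneg)
  have u'inc: "u' x < u' y" if xy: "x \<in> S" "y \<in> S" "x < y" for x y
  proof (rule DERIV_pos_imp_increasing_open[OF xy(3)])
    fix t assume t: "x < t" "t < y"
    have "t \<in> Op" using inOp[OF xy(1,2) t] .
    moreover have "t \<in> S" using \<open>t \<in> Op\<close> OpS by auto
    ultimately show "\<exists>d. (u' has_real_derivative d) (at t) \<and> 0 < d"
      using toat Sd2 upppos by blast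
  next
    show "continuous_on {x..y} u'" using continuous_on_subset[OF contu' seg[OF xy(1,2)]] .
  qed
  have mvt: "\<exists>z. x < z \<and> z < y \<and> u y - u x = (y - x) * u' z"
    if xy: "x \<in> S" "y \<in> S" "x < y" for x y
  proof -
    have "\<exists>l z. x < z \<and> z < y \<and> DERIV u z :> l \<and> u y - u x = (y - x) * l"
    proof (rule MVT[OF xy(3)])
      show "continuous_on {x..y} u" using continuous_on_subset[OF contu seg[OF xy(1,2)]] .
    next
      fix t assume t: "x < t" "t < y"
      have "t \<in> Op" using inOp[OF xy(1,2) t] .
      moreover have "t \<in> S" using \<open>t \<in> Op\<close> OpS by auto
      ultimately show "u differentiable (at t)"
        using toat Sd1 real_differentiable_def by blast
    qed
    then obtain l z where lz: "x < z" "z < y" "DERIV u z :> l" "u y - u x = (y - x) * l" by blast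
    have "z \<in> Op" using inOp[OF xy(1,2) lz(1,2)] .
    then have "DERIV u z :> u' z" using toat Sd1 OpS by blast
    then have "l = u' z" using DERIV_unique lz(3) by blast
    then show ?thesis using lz by blast
  qed
  have key: "u ((1 - t) * x + t * y) < (1 - t) * u x + t * u y"
    if xy: "x \<in> S" "y \<in> S" "x < y" and t: "0 < t" "t < 1" for x y t
  proof -
    define z where "z = (1 - t) * x + t * y"
    have zx: "z - x = t * (y - x)" unfolding z_def by (simp add: algebra_simps)
    have yz: "y - z = (1 - t) * (y - x)" unfolding z_def by (simp add: algebra_simps)
    have xz: "x < z" using zx t xy by (smt (verit) mult_pos_pos)
    have zy: "z < y" using yz t xy by (smt (verit) mult_pos_pos)
    have zS: "z \<in> S" using seg[OF xy(1,2)] xz zy by auto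
    obtain z1 where z1: "x < z1" "z1 < z" "u z - u x = (z - x) * u' z1" using mvt[OF xy(1) zS xz] by blast
    obtain z2 where z2: "z < z2" "z2 < y" "u y - u z = (y - z) * u' z2" using mvt[OF zS xy(2) zy] by blast
    have z1S: "z1 \<in> S" using seg[OF xy(1) zS] z1 by auto
    have z2S: "z2 \<in> S" using seg[OF zS xy(2)] z2 by auto
    have lt: "u' z1 < u' z2" using u'inc[OF z1S z2S] z1 z2 by auto
    have eq: "(1 - t) * u x + t * u y - u z = t * (1 - t) * (y - x) * (u' z2 - u' z1)"
    proof -
      have "(1 - t) * u x + t * u y - u z = t * (u y - u z) - (1 - t) * (u z - u x)"
        by (simp add: algebra_simps)
      also have "\<dots> = t * ((1 - t) * (y - x) * u' z2) - (1 - t) * (t * (y - x) * u' z1)"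
        using z1(3) z2(3) zx yz by simp
      finally show ?thesis by (simp add: algebra_simps)
    qed
    have "0 < t * (1 - t) * (y - x) * (u' z2 - u' z1)"
      using t xy lt by simp
    then show ?thesis using eq unfolding z_def by simp
  qed
  have convS: "convex S"
  proof (rule convexI)
    fix x y a c :: real
    assume h: "x \<in> S" "y \<in> S" "0 \<le> a" "0 \<le> c" "a + c = 1"
    have "a *\<^sub>R x + c *\<^sub>R y \<in> {min x y..max x y}"
    proof -
      have "a * x + c * y \<le> a * max x y + c * max x y"
        using h by (intro add_mono mult_left_mono) auto
      moreover have "a * min x y + c * min x y \<le> a * x + c * y"
        using h by (intro add_mono mult_left_mono) auto
      moreover have "a * max x y + c * max x y = max x y"
        using h(5) by (metis distrib_right mult_1)
      moreover have "a * min x y + c * min x y = min x y"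
        using h(5) by (metis distrib_right mult_1)
      ultimately show ?thesis by simp
    qed
    moreover have "{min x y..max x y} \<subseteq> S"
      using seg h by (cases "x \<le> y") (auto simp: min_def max_def)
    ultimately show "a *\<^sub>R x + c *\<^sub>R y \<in> S" by blast
  qed
  show ?thesis
    unfolding strictly_convex_on_def S_def[symmetric]
  proof (intro conjI convS ballI allI impI)
    fix x y t :: real assume h: "x \<in> S" "y \<in> S" "x \<noteq> y" "0 < t" "t < 1"
    show "u ((1 - t) * x + t * y) < (1 - t) * u x + t * u y"
    proof (cases "x < y")
      case True then show ?thesis using key h by blast
    next
      case False
      then have "y < x" using h by auto
      from key[OF h(2) h(1) this, of "1 - t"] h
      show ?thesis by (simp add: algebra_simps)
    qed
  qed
qed

end
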